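(* Let $L$ be a real vector space endowed with a preorder $\le$, let $C\subset L$ be nonempty and $M\subset C$ a nonempty linear subspace such that: $C$ is exhaustive (for every $X\in L$ there is $X_0\in C$ with $X_0\ge X$); $X+m\in C$ for all $X\in C$, $m\in M$; and $X+m\le Y+m$ for all $m\in M$ and $X,Y\in L$ with $X\le Y$. Let $H\colon C\to\mathbb{R}$ be a premium principle and define $$R_{\mathrm{Max}}(X):=\inf\{H(X_0)\mid X_0\in C,\ X_0\ge X\},\quad X\in L.$$ Then $R_{\mathrm{Max}}\colon L\to\mathbb{R}$ is a risk measure with $R_{\mathrm{Max}}(X)\le H(X)$ for all $X\in C$ and $R_{\mathrm{Max}}(m)=H(m)$ for all $m\in M$. In particular, $D_{\mathrm{Min}}(X):=H(X)-R_{\mathrm{Max}}(X)$, $X\in C$, is a deviation measure and $H=R_{\mathrm{Max}}+D_{\mathrm{Min}}$ on $C$. Moreover, if $R\colon L\to\mathbb{R}$ is a risk measure and $D\colon C\to\mathbb{R}$ a deviation measure with $H(X)=R(X)+D(X)$ for all $X\in C$, then $R(X)\le R_{\mathrm{Max}}(X)$ for all $X\in L$ and $D(X)\ge D_{\mathrm{Min}}(X)$ for all $X\in C$.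
   Context: A premium principle is a map $H\colon C\to\mathbb{R}$ with (P1') $H(X+m)=H(X)+H(m)$ for all $X\in C$, $m\in M$; (P2') $H(0)=0$ and $H(X)\ge0$ for all $X\in C$ with $X\ge0$; (P3') $\inf\{H(X_0)\mid X_0\in C,\ X_0\ge X\}>-\infty$ for all $X\in L$. A risk measure is a map $R\colon L\to\mathbb{R}$ with $R(X+m)=R(X)+R(m)$ for all $X\in C$, $m\in M$, and $R(0)=0$, $R(X)\le R(Y)$ for all $X,Y\in L$ with $X\le Y$. A deviation measure is a map $D\colon C\to\mathbb{R}$ with $D(X+m)=D(X)$ for all $X\in C$, $m\in M$, $D(0)=0$, and $D(X)\ge0$ for all $X\in C$. *)

theory Defs
  imports "HOL-Analysis.Analysis"
begin

text \<open>L is modelled as the type 'a (a real vector space carrying a preorder \<le>).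
  Functions defined only on C are modelled as total functions whose values
  outside C are irrelevant.\<close>

definition premium_principle ::
  "'a::{real_vector,preorder} set \<Rightarrow> 'a set \<Rightarrow> ('a \<Rightarrow> real) \<Rightarrow> bool" where
  "premium_principle C M H \<longleftrightarrow>
     (\<forall>X\<in>C. \<forall>m\<in>M. H (X + m) = H X + H m) \<and>
     H 0 = 0 \<and> (\<forall>X\<in>C. 0 \<le> X \<longrightarrow> H X \<ge> 0) \<and>
     (\<forall>X. bdd_below {H X0 | X0. X0 \<in> C \<and> X0 \<ge> X})"

definition risk_measure ::
  "'a::{real_vector,preorder} set \<Rightarrow> 'a set \<Rightarrow> ('a \<Rightarrow> real) \<Rightarrow> bool" where
  "risk_measure C M R \<longleftrightarrow>
     (\<forall>X\<in>C. \<forall>m\<in>M. R (X + m) = R X + R m) \<and>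
     R 0 = 0 \<and> (\<forall>X Y. X \<le> Y \<longrightarrow> R X \<le> R Y)"

definition deviation_measure ::
  "'a::{real_vector,preorder} set \<Rightarrow> 'a set \<Rightarrow> ('a \<Rightarrow> real) \<Rightarrow> bool" where
  "deviation_measure C M D \<longleftrightarrow>
     (\<forall>X\<in>C. \<forall>m\<in>M. D (X + m) = D X) \<and>
     D 0 = 0 \<and> (\<forall>X\<in>C. D X \<ge> 0)"

definition R_Max :: "'a::{real_vector,preorder} set \<Rightarrow> ('a \<Rightarrow> real) \<Rightarrow> 'a \<Rightarrow> real" where
  "R_Max C H X = Inf {H X0 | X0. X0 \<in> C \<and> X0 \<ge> X}"

end

theory Submission
  imports Defs
begin

theorem theorem4p6:
  fixes C M :: "'a::{real_vector,preorder} set" and H :: "'a \<Rightarrow> real"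
  assumes C_ne: "C \<noteq> {}"
    and M_sub: "subspace M" and M_ne: "M \<noteq> {}" and MC: "M \<subseteq> C"
    and exhaustive: "\<forall>X. \<exists>X0\<in>C. X0 \<ge> X"
    and C_trans: "\<forall>X\<in>C. \<forall>m\<in>M. X + m \<in> C"
    and le_trans_inv: "\<forall>m\<in>M. \<forall>X Y. X \<le> Y \<longrightarrow> X + m \<le> Y + m"
    and H: "premium_principle C M H"
  shows "risk_measure C M (R_Max C H)
     \<and> (\<forall>X\<in>C. R_Max C H X \<le> H X)
     \<and> (\<forall>m\<in>M. R_Max C H m = H m)
     \<and> deviation_measure C M (\<lambda>X. H X - R_Max C H X)
     \<and> (\<forall>X\<in>C. H X = R_Max C H X + (H X - R_Max C H X))
     \<and> (\<forall>R D. risk_measure C M R \<and> deviation_measure C M D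
          \<and> (\<forall>X\<in>C. H X = R X + D X)
          \<longrightarrow> (\<forall>X. R X \<le> R_Max C H X) \<and> (\<forall>X\<in>C. D X \<ge> H X - R_Max C H X))"
proof -
  define S where "S X = {H X0 | X0. X0 \<in> C \<and> X0 \<ge> X}" for X
  have RS: "R_Max C H X = Inf (S X)" for X by (simp add: R_Max_def S_def)
  have Hadd: "\<And>X m. X \<in> C \<Longrightarrow> m \<in> M \<Longrightarrow> H (X + m) = H X + H m"
   and H0: "H 0 = 0" and Hpos: "\<And>X. X \<in> C \<Longrightarrow> 0 \<le> X \<Longrightarrow> H X \<ge> 0"
   and bdd: "\<And>X. bdd_below (S X)"
    using H unfolding premium_principle_def S_def by auto
  have ne: "S X \<noteq> {}" for X using exhaustive unfolding S_def by blast
  have negM: "-m \<in> M" if "m \<in> M" for m using M_sub that by (rule subspace_neg)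
  have shift: "X + m \<le> Y + m" if "X \<le> Y" "m \<in> M" for X Y m using le_trans_inv that by blast
  have Ctr: "X + m \<in> C" if "X \<in> C" "m \<in> M" for X m using C_trans that by blast
  have Rm: "R_Max C H m = H m" if m: "m \<in> M" for m
  proof -
    have mC: "m \<in> C" using MC m by auto
    have lb: "H m \<le> y" if "y \<in> S m" for y
    proof -
      obtain X0 where X0: "X0 \<in> C" "X0 \<ge> m" "y = H X0" using \<open>y \<in> S m\<close> unfolding S_def by blast
      have "m + - m \<le> X0 + - m" using shift[OF X0(2) negM[OF m]] .
      hence "0 \<le> X0 - m" by simp
      moreover have "X0 - m \<in> C" using Ctr[OF X0(1) negM[OF m]] by simp
      ultimately have "H (X0 - m) \<ge> 0" using Hpos by blast
      moreover have "H X0 = H (X0 - m) + H m" using Hadd[OF \<open>X0 - m \<in> C\<close> m] by simp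
      ultimately show ?thesis using X0 by simp
    qed
    have "H m \<in> S m" unfolding S_def using mC by auto
    hence "Inf (S m) = H m" using lb
      by (meson bdd cInf_eq_minimum)
    thus ?thesis by (simp add: RS)
  qed
  have RleH: "R_Max C H X \<le> H X" if "X \<in> C" for X
  proof -
    have "H X \<in> S X" unfolding S_def using that by auto
    thus ?thesis unfolding RS using bdd by (simp add: cInf_lower)
  qed
  have Rtr: "R_Max C H (X + m) = R_Max C H X + R_Max C H m" if X: "X \<in> C" and m: "m \<in> M" for X m
  proof -
    have "S (X + m) = (\<lambda>y. y + H m) ` S X"
    proof (intro equalityI subsetI)
      fix y assume "y \<in> S (X + m)"
      then obtain Z where Z: "Z \<in> C" "Z \<ge> X + m" "y = H Z" unfolding S_def by blast
      have "X + m + - m \<le> Z + - m" using shift[OF Z(2) negM[OF m]] .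
      hence "X \<le> Z - m" by simp
      moreover have "Z - m \<in> C" using Ctr[OF Z(1) negM[OF m]] by simp
      moreover have "H Z = H (Z - m) + H m" using Hadd[OF \<open>Z - m \<in> C\<close> m] by simp
      ultimately show "y \<in> (\<lambda>y. y + H m) ` S X" unfolding S_def using Z by blast
    next
      fix y assume "y \<in> (\<lambda>y. y + H m) ` S X"
      then obtain Y where Y: "Y \<in> C" "Y \<ge> X" "y = H Y + H m" unfolding S_def by blast
      show "y \<in> S (X + m)" unfolding S_def using Y Hadd[OF Y(1) m] Ctr[OF Y(1) m] shift[OF Y(2) m]
        by (metis (mono_tags, lifting) mem_Collect_eq)
    qed
    moreover have "Inf ((\<lambda>y. y + H m) ` S X) = Inf (S X) + H m"
    proof (rule antisym)
      show "Inf ((\<lambda>y. y + H m) ` S X) \<le> Inf (S X) + H m"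
      proof -
        have "Inf ((\<lambda>y. y + H m) ` S X) - H m \<le> z" if "z \<in> S X" for z
        proof -
          have "bdd_below ((\<lambda>y. y + H m) ` S X)"
            using bdd[of X] unfolding bdd_below_def by (metis add_le_cancel_right imageE)
          hence "Inf ((\<lambda>y. y + H m) ` S X) \<le> z + H m" using that by (simp add: cInf_lower)
          thus ?thesis by simp
        qed
        hence "Inf ((\<lambda>y. y + H m) ` S X) - H m \<le> Inf (S X)" using ne by (meson cInf_greatest)
        thus ?thesis by simp
      qed
      show "Inf (S X) + H m \<le> Inf ((\<lambda>y. y + H m) ` S X)"
        using ne bdd by (auto intro!: cInf_greatest cInf_lower)
    qed
    ultimately have "Inf (S (X + m)) = Inf (S X) + H m" by simp
    thus ?thesis using Rm[OF m] by (simp add: RS)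
  qed
  have Rmono: "R_Max C H X \<le> R_Max C H Y" if "X \<le> Y" for X Y
  proof -
    have "S Y \<subseteq> S X" unfolding S_def using that order_trans by blast
    thus ?thesis unfolding RS using ne bdd by (simp add: cInf_superset_mono)
  qed
  have R0: "R_Max C H 0 = 0" using Rm[of 0] H0 M_sub by (simp add: subspace_0)
  have risk: "risk_measure C M (R_Max C H)"
    unfolding risk_measure_def using Rtr R0 Rmono by blast
  have dev: "deviation_measure C M (\<lambda>X. H X - R_Max C H X)"
    unfolding deviation_measure_def using Rtr Rm Hadd R0 H0 RleH by auto
  have minim: "(\<forall>X. R X \<le> R_Max C H X) \<and> (\<forall>X\<in>C. D X \<ge> H X - R_Max C H X)"
    if R: "risk_measure C M R" and D: "deviation_measure C M D" and HRD: "\<forall>X\<in>C. H X = R X + D X" for R D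
  proof -
    have RX: "R X \<le> R_Max C H X" for X
    proof -
      have "R X \<le> y" if "y \<in> S X" for y
      proof -
        obtain X0 where X0: "X0 \<in> C" "X0 \<ge> X" "y = H X0" using \<open>y \<in> S X\<close> unfolding S_def by blast
        have "R X \<le> R X0" using R X0 unfolding risk_measure_def by blast
        moreover have "D X0 \<ge> 0" using D X0 unfolding deviation_measure_def by blast
        ultimately show ?thesis using HRD X0 by force
      qed
      thus ?thesis unfolding RS using ne by (meson cInf_greatest)
    qed
    show ?thesis using RX HRD by force
  qed
  show ?thesis using risk RleH Rm dev minim by auto
qed

end
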